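(* Let $q=2^m\geq 4$ with $m$ a positive integer. Let $\delta\in\mathbb{F}_{q^2}$ and $b\in\mathbb{F}_q^*$ satisfy $b^4\,\mathrm{Tr}_{q^2/q}(\delta)=1$. Then the compositional inverse of $$P(x)=b(x^q+x+\delta)^{q(2q+3)/4}+x$$ over $\mathbb{F}_{q^2}$ is $$P^{-1}(x)=x+b\left(\mathrm{Tr}_{q^2/q}(\delta)^{-1}(x^q+x)^2+\delta^{q+1}\mathrm{Tr}_{q^2/q}(\delta)^{-1}+\delta\right)^{q(2q+3)/4}.$$
   Context: $\mathrm{Tr}_{q^2/q}(y)=y+y^q$. The compositional inverse of a permutation polynomial $f$ of $\mathbb{F}_{Q}$ is the unique polynomial $f^{-1}$ (modulo $x^Q-x$) with $f(f^{-1}(c))=f^{-1}(f(c))=c$ for all $c\in\mathbb{F}_Q$; in particular the statement includes that $P$ permutes $\mathbb{F}_{q^2}$. *)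

theory Defs
  imports Main
begin

text \<open>Relative trace from F_{q^2} to F_q, where F_q is the subfield of F_{q^2}
  of elements fixed by y |-> y^q.\<close>
definition trace_q2q :: "nat \<Rightarrow> 'a::field \<Rightarrow> 'a" where
  "trace_q2q q y = y + y ^ q"

end

theory Submission
  imports Defs
begin

lemma fermat_fin:
  fixes x :: "'a::{field,finite}"
  shows "x ^ card (UNIV :: 'a set) = x"
proof (cases "x = 0")
  case True
  have "card (UNIV :: 'a set) > 0" by (simp add: finite_UNIV_card_ge_0)
  then show ?thesis using True by (simp add: power_0_left)
next
  case False
  let ?S = "UNIV - {0::'a}"
  have bij: "bij_betw (\<lambda>y. x * y) ?S ?S"
  proof -
    have "inj_on (\<lambda>y. x * y) ?S"
    proof (rule inj_onI)
      fix u v assume "x * u = x * v"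
      then show "u = v" using False by simp
    qed
    moreover have "(\<lambda>y. x * y) ` ?S = ?S"
    proof
      show "(\<lambda>y. x * y) ` ?S \<subseteq> ?S"
      proof
        fix u assume "u \<in> (\<lambda>y. x * y) ` ?S"
        then obtain v where "v \<noteq> 0" "u = x * v" by blast
        then show "u \<in> ?S" using False by simp
      qed
      show "?S \<subseteq> (\<lambda>y. x * y) ` ?S"
      proof
        fix y assume y: "y \<in> ?S"
        have "y = x * (inverse x * y)" using False by (simp add: mult.assoc[symmetric])
        moreover have "inverse x * y \<in> ?S" using False y by simp
        ultimately show "y \<in> (\<lambda>y. x * y) ` ?S" by (rule image_eqI)
      qed
    qed
    ultimately show ?thesis by (simp add: bij_betw_def)
  qed
  have "prod (\<lambda>y. x * y) ?S = prod id ?S"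
    using prod.reindex_bij_betw[OF bij, of id] by simp
  moreover have "prod (\<lambda>y. x * y) ?S = x ^ card ?S * prod id ?S"
    by (simp add: prod.distrib)
  moreover have "prod id ?S \<noteq> 0" by simp
  ultimately have "x ^ card ?S = 1" by simp
  moreover have "card ?S + 1 = card (UNIV :: 'a set)"
  proof -
    have "card ?S = card (UNIV :: 'a set) - 1" by (rule card_Diff_singleton) simp_all
    moreover have "card (UNIV :: 'a set) > 0" by (rule finite_UNIV_card_ge_0) simp
    ultimately show ?thesis by simp
  qed
  ultimately show ?thesis
  proof -
    assume h1: "x ^ card ?S = 1" and h2: "card ?S + 1 = card (UNIV :: 'a set)"
    have "x ^ card (UNIV :: 'a set) = x ^ card ?S * x" unfolding h2[symmetric] by (rule power_Suc2[unfolded Suc_eq_plus1])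
    then show ?thesis using h1 by simp
  qed
qed

lemma frob2:
  fixes x y :: "'a::field"
  assumes "(2::'a) = 0"
  shows "(x + y) ^ (2 ^ k) = x ^ (2 ^ k) + y ^ (2 ^ k)"
proof (induction k)
  case 0 then show ?case by simp
next
  case (Suc k)
  have "(x + y) ^ (2 ^ Suc k) = ((x + y) ^ (2 ^ k))^2"
    by (simp add: power_mult[symmetric] mult.commute)
  also have "\<dots> = (x ^ (2 ^ k) + y ^ (2 ^ k))^2" using Suc by simp
  also have "\<dots> = (x ^ (2 ^ k))^2 + (y ^ (2 ^ k))^2 + 2 * x ^ (2 ^ k) * y ^ (2 ^ k)"
    by (simp add: power2_eq_square algebra_simps)
  also have "\<dots> = (x ^ (2 ^ k))^2 + (y ^ (2 ^ k))^2" using assms by simp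
  also have "\<dots> = x ^ (2 ^ Suc k) + y ^ (2 ^ Suc k)"
    by (simp add: power_mult[symmetric] mult.commute)
  finally show ?case .
qed

lemma char2_add_self:
  fixes x :: "'a::field"
  assumes "(2::'a) = 0"
  shows "x + x = 0"
  by (metis assms mult_2 mult_zero_left)

theorem theorem3p3:
  fixes m :: nat and q :: nat and \<delta> b :: "'a::{field,finite}"
    and P Pinv :: "'a \<Rightarrow> 'a"
  assumes "m \<ge> 1" and "q = 2 ^ m" and "q \<ge> 4"
    and "card (UNIV :: 'a set) = q ^ 2"
    and "b ^ q = b" and "b \<noteq> 0"
    and "b ^ 4 * trace_q2q q \<delta> = 1"
    and "\<And>x. P x = b * (x ^ q + x + \<delta>) ^ (q * (2 * q + 3) div 4) + x"
    and "\<And>x. Pinv x = x + b * (inverse (trace_q2q q \<delta>) * (x ^ q + x) ^ 2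
               + \<delta> ^ (q + 1) * inverse (trace_q2q q \<delta>) + \<delta>) ^ (q * (2 * q + 3) div 4)"
  shows "bij P \<and> (\<forall>c. P (Pinv c) = c \<and> Pinv (P c) = c)"
proof -
  have fer: "\<And>x::'a. x ^ (q^2) = x" using fermat_fin assms(4) by metis
  have two: "(2::'a) = 0"
  proof -
    have "even (q^2)" using assms(2,1) by simp
    then have "(-1::'a) ^ (q^2) = 1" by simp
    then have "(-1::'a) = 1" using fer by metis
    then show ?thesis by (metis add_eq_0_iff2 one_add_one)
  qed
  have aa: "\<And>x::'a. x + x = 0" using char2_add_self[OF two] .
  have neg: "\<And>x::'a. - x = x" using aa by (metis add_eq_0_iff2)
  have fq: "\<And>x y::'a. (x + y) ^ q = x ^ q + y ^ q" using frob2[OF two] assms(2) by blast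
  have f4: "\<And>x y::'a. (x + y) ^ 4 = x ^ 4 + y ^ 4" using frob2[OF two, of _ _ 2] by simp
  have f2: "\<And>x y::'a. (x + y) ^ 2 = x ^ 2 + y ^ 2" using frob2[OF two, of _ _ 1] by simp
  define T where "T = trace_q2q q \<delta>"
  have T: "T = \<delta> + \<delta> ^ q" unfolding T_def trace_q2q_def by simp
  have bT: "b ^ 4 * T = 1" using assms(7) T_def by simp
  have Tnz: "T \<noteq> 0" using bT by auto
  define e where "e = q * (2 * q + 3) div 4"
  obtain r where qr: "q = 4 * r"
  proof -
    have "m \<ge> 2"
    proof (rule ccontr)
      assume "\<not> m \<ge> 2"
      then have "m = 1" using assms(1) by simp
      then show False using assms(2,3) by simp
    qed
    then have "(2::nat) ^ m = 4 * 2 ^ (m - 2)"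
      by (metis le_add_diff_inverse power_add power2_eq_square numeral_Bit0 mult_2 numeral_times_numeral semiring_norm(12))
    then show ?thesis using that assms(2) by auto
  qed
  have e4: "4 * e = 2 * q^2 + 3 * q" unfolding e_def qr by (simp add: algebra_simps power2_eq_square)
  have key: "Pinv (P x) = x" for x
  proof -
    define t where "t = x ^ q + x"
    define z where "z = t + \<delta>"
    define w where "w = z ^ e"
    define y where "y = P x"
    have y: "y = b * w + x" unfolding y_def w_def z_def t_def e_def using assms(8) by simp
    have tq: "t ^ q = t" unfolding t_def using fq fer by (simp add: power_mult[symmetric] power2_eq_square add.commute)
    have zq: "z ^ q = t + \<delta> ^ q" unfolding z_def using fq tq by simp
    have w4: "w ^ 4 = z ^ 2 * z ^ (3 * q)"
    proof -
      have "w ^ 4 = z ^ (2 * q^2 + 3 * q)" unfolding w_def using e4 by (simp add: power_mult[symmetric] mult.commute)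
      also have "\<dots> = (z ^ (q^2))^2 * z ^ (3*q)" by (simp add: power_add power_mult[symmetric] mult.commute)
      finally show ?thesis using fer by simp
    qed
    have wq4: "(w ^ q) ^ 4 = z ^ (2 * q) * z ^ 3"
    proof -
      have "(w ^ q) ^ 4 = (w ^ 4) ^ q" by (simp add: power_mult[symmetric] mult.commute)
      also have "\<dots> = z ^ (2 * q) * (z ^ (q^2)) ^ 3"
      proof -
        have "(w ^ 4) ^ q = (z ^ 2) ^ q * (z ^ (3 * q)) ^ q" using w4 by (simp add: power_mult_distrib)
        also have "(z ^ 2) ^ q = z ^ (2 * q)" by (simp add: power_mult)
        also have "(z ^ (3 * q)) ^ q = (z ^ (q^2)) ^ 3"
        proof -
          have "(z ^ (3 * q)) ^ q = z ^ (3 * q * q)" by (rule power_mult[symmetric])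
          also have "3 * q * q = q^2 * 3" by (simp add: power2_eq_square)
          also have "z ^ (q^2 * 3) = (z ^ (q^2)) ^ 3" by (rule power_mult)
          finally show ?thesis .
        qed
        finally show ?thesis .
      qed
      finally show ?thesis using fer by simp
    qed
    have zzq: "z ^ q + z = T" unfolding zq unfolding z_def T using aa by (simp add: algebra_simps)
    define s where "s = b * (w + w ^ q)"
    have s4: "s ^ 4 = (z * z ^ q) ^ 2"
    proof -
      have "s ^ 4 = b^4 * (w ^ 4 + (w ^ q) ^ 4)" unfolding s_def using f4 by (simp add: power_mult_distrib)
      also have "w ^ 4 + (w ^ q) ^ 4 = (z * z ^ q) ^ 2 * (z ^ q + z)"
        unfolding w4 wq4 by (simp add: power2_eq_square power_mult power_add algebra_simps numeral_3_eq_3)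
      also have "b ^ 4 * ((z * z ^ q) ^ 2 * (z ^ q + z)) = (z * z ^ q) ^ 2 * (b ^ 4 * T)" using zzq by (simp only: mult_ac)
      finally show ?thesis using bT by simp
    qed
    have s2: "s ^ 2 = z * z ^ q"
    proof -
      have "(s ^ 2 + z * z ^ q) ^ 2 = 0" using f2[of "s^2" "z * z^q"] s4 aa
        by (simp add: power_mult[symmetric])
      then have "s ^ 2 + z * z ^ q = 0" by simp
      then show ?thesis by (metis add_eq_0_iff2 neg)
    qed
    have yq: "y ^ q + y = s + t"
    proof -
      have "y ^ q = b * w ^ q + x ^ q" unfolding y using fq assms(5) by (simp add: power_mult_distrib)
      then show ?thesis unfolding y s_def t_def using aa by (simp add: algebra_simps)
    qed
    have yq2: "(y ^ q + y) ^ 2 = t * T + \<delta> ^ (q + 1)"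
    proof -
      have "(y ^ q + y) ^ 2 = z * z ^ q + t ^ 2" using yq f2 s2 by simp
      also have "\<dots> = t * T + \<delta> ^ (q + 1) + (t * t + t * t)"
        unfolding zq unfolding z_def T by (simp add: algebra_simps power2_eq_square)
      finally show ?thesis using aa by simp
    qed
    have u: "inverse T * (y ^ q + y) ^ 2 + \<delta> ^ (q + 1) * inverse T + \<delta> = z"
    proof -
      have "inverse T * (y ^ q + y) ^ 2 = t + \<delta> ^ (q + 1) * inverse T"
        using yq2 Tnz by (simp add: field_simps)
      then have "inverse T * (y ^ q + y) ^ 2 + \<delta> ^ (q + 1) * inverse T + \<delta>
          = t + (\<delta> ^ (q + 1) * inverse T + \<delta> ^ (q + 1) * inverse T) + \<delta>"
        by (simp only: add.assoc)
      then show ?thesis unfolding z_def aa by simp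
    qed
    have "Pinv y = y + b * w" using assms(9)[of y] u unfolding T_def w_def e_def by simp
    also have "\<dots> = x" unfolding y using aa by (simp add: algebra_simps)
    finally show ?thesis unfolding y_def .
  qed
  have inj: "inj P" by (metis injI key)
  then have surj: "surj P" by (simp add: finite_UNIV_inj_surj)
  have "P (Pinv c) = c" for c
  proof -
    obtain x where "c = P x" using surj by blast
    then show ?thesis using key by simp
  qed
  then show ?thesis using inj surj key bij_def by blast
qed

end
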